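(* Assume the environment is elliptic. Let $\mathfrak{m}_n\in\mathbb{R}^m$ (column vectors) satisfy $\mathfrak{m}_n=P_n\mathfrak{m}_{n+1}+R_n\mathfrak{m}_n+Q_n\mathfrak{m}_{n-1}$ for all $n$, and let $\rho_n$ (row vectors) satisfy $\rho_n=\rho_{n-1}P_{n-1}+\rho_nR_n+\rho_{n+1}Q_{n+1}$ together with $\rho_n=\rho_{n+1}\alpha_n$ and $\rho_{n+1}=\rho_n\alpha^-_{n+1}$ for all $n$. Then there exists a constant $c$ such that for all $n$ $$\rho_{n+1}Q_{n+1}(\mathfrak{m}_n-\zeta_n\mathfrak{m}_{n+1})=c,\qquad\rho_nP_n(\mathfrak{m}_{n+1}-\zeta^-_{n+1}\mathfrak{m}_n)=-c.$$
   Context: $m\ge1$; an environment is $(P_n,Q_n,R_n)_{n\in\mathbb{Z}}$, nonnegative $m\times m$ matrices with $(P_n+Q_n+R_n)\mathbf{1}=\mathbf{1}$. Norm $\|x\|=\max|x_i|$ with induced matrix norm. Ellipticity: there are $\bar\varepsilon>0$, $k_0$ with $\|R_n^{k_0}\|\le1-\bar\varepsilon$, $((I-R_n)^{-1}P_n)(i,j)\ge\bar\varepsilon$, $((I-R_n)^{-1}Q_n)(i,j)\ge\bar\varepsilon$ for all $n,i,j$. $\zeta_n=\lim_{a\to-\infty}\psi_{n,a}$, where $\psi_{a,a}$ is any stochastic matrix and $\psi_{n,a}=(I-R_n-Q_n\psi_{n-1,a})^{-1}P_n$ for $n>a$ (the limit exists, is independent of choices, and satisfies $\zeta_n=(I-R_n-Q_n\zeta_{n-1})^{-1}P_n$);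 symmetrically $\zeta^-_n$ is the stochastic sequence with $\zeta^-_n=(I-R_n-P_n\zeta^-_{n+1})^{-1}Q_n$ obtained as the analogous limit from $+\infty$. $\alpha_n=Q_{n+1}(I-R_n-Q_n\zeta_{n-1})^{-1}$ and $\alpha^-_n=P_{n-1}(I-R_n-P_n\zeta^-_{n+1})^{-1}$. *)

theory Defs
  imports "HOL-Analysis.Analysis"
begin

text \<open>Matrices are m x m real matrices, m = CARD('m). Column vectors: real^'m,
  row vectors act by v*.  Index n ranges over the integers.\<close>

definition nonneg_mat :: "real^'m^'m \<Rightarrow> bool" where
  "nonneg_mat A \<longleftrightarrow> (\<forall>i j. A$i$j \<ge> 0)"

definition ones :: "real^'m" where
  "ones = (\<chi> i. 1)"

definition environment :: "(int \<Rightarrow> real^'m^'m) \<Rightarrow> (int \<Rightarrow> real^'m^'m) \<Rightarrow> (int \<Rightarrow> real^'m^'m) \<Rightarrow> bool" where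
  "environment P Q R \<longleftrightarrow>
     (\<forall>n. nonneg_mat (P n) \<and> nonneg_mat (Q n) \<and> nonneg_mat (R n) \<and>
          (P n + Q n + R n) *v ones = ones)"

definition mat_opnorm :: "real^'m^'m \<Rightarrow> real" where
  "mat_opnorm A = (SUP x\<in>{x::real^'m. infnorm x \<le> 1}. infnorm (A *v x))"

fun mat_pow :: "real^'m^'m \<Rightarrow> nat \<Rightarrow> real^'m^'m" where
  "mat_pow A 0 = mat 1"
| "mat_pow A (Suc k) = A ** mat_pow A k"

definition elliptic :: "(int \<Rightarrow> real^'m^'m) \<Rightarrow> (int \<Rightarrow> real^'m^'m) \<Rightarrow> (int \<Rightarrow> real^'m^'m) \<Rightarrow> bool" where
  "elliptic P Q R \<longleftrightarrow>
     (\<exists>eps::real. \<exists>k0::nat. eps > 0 \<and>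
        (\<forall>n. mat_opnorm (mat_pow (R n) k0) \<le> 1 - eps \<and>
             (\<forall>i j. (matrix_inv (mat 1 - R n) ** P n)$i$j \<ge> eps) \<and>
             (\<forall>i j. (matrix_inv (mat 1 - R n) ** Q n)$i$j \<ge> eps)))"

text \<open>psi_fw P Q R a k = psi_{a+k,a}, started from psi_{a,a} = I (a stochastic matrix).\<close>
fun psi_fw :: "(int \<Rightarrow> real^'m^'m) \<Rightarrow> (int \<Rightarrow> real^'m^'m) \<Rightarrow> (int \<Rightarrow> real^'m^'m) \<Rightarrow> int \<Rightarrow> nat \<Rightarrow> real^'m^'m" where
  "psi_fw P Q R a 0 = mat 1"
| "psi_fw P Q R a (Suc k) =
     matrix_inv (mat 1 - R (a + int k + 1) - Q (a + int k + 1) ** psi_fw P Q R a k) ** P (a + int k + 1)"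

text \<open>psi_bw P Q R b k = psi^-_{b-k,b}, started from psi^-_{b,b} = I.\<close>
fun psi_bw :: "(int \<Rightarrow> real^'m^'m) \<Rightarrow> (int \<Rightarrow> real^'m^'m) \<Rightarrow> (int \<Rightarrow> real^'m^'m) \<Rightarrow> int \<Rightarrow> nat \<Rightarrow> real^'m^'m" where
  "psi_bw P Q R b 0 = mat 1"
| "psi_bw P Q R b (Suc k) =
     matrix_inv (mat 1 - R (b - int k - 1) - P (b - int k - 1) ** psi_bw P Q R b k) ** Q (b - int k - 1)"

definition zeta :: "(int \<Rightarrow> real^'m^'m) \<Rightarrow> (int \<Rightarrow> real^'m^'m) \<Rightarrow> (int \<Rightarrow> real^'m^'m) \<Rightarrow> int \<Rightarrow> real^'m^'m" where
  "zeta P Q R n = Lim at_bot (\<lambda>a. psi_fw P Q R a (nat (n - a)))"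

definition zeta_minus :: "(int \<Rightarrow> real^'m^'m) \<Rightarrow> (int \<Rightarrow> real^'m^'m) \<Rightarrow> (int \<Rightarrow> real^'m^'m) \<Rightarrow> int \<Rightarrow> real^'m^'m" where
  "zeta_minus P Q R n = Lim at_top (\<lambda>b. psi_bw P Q R b (nat (b - n)))"

definition alpha :: "(int \<Rightarrow> real^'m^'m) \<Rightarrow> (int \<Rightarrow> real^'m^'m) \<Rightarrow> (int \<Rightarrow> real^'m^'m) \<Rightarrow> int \<Rightarrow> real^'m^'m" where
  "alpha P Q R n = Q (n + 1) ** matrix_inv (mat 1 - R n - Q n ** zeta P Q R (n - 1))"

definition alpha_minus :: "(int \<Rightarrow> real^'m^'m) \<Rightarrow> (int \<Rightarrow> real^'m^'m) \<Rightarrow> (int \<Rightarrow> real^'m^'m) \<Rightarrow> int \<Rightarrow> real^'m^'m" where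
  "alpha_minus P Q R n = P (n - 1) ** matrix_inv (mat 1 - R n - P n ** zeta_minus P Q R (n + 1))"

end

theory Submission
  imports Defs
begin


type_synonym 'n mt = "real^'n^'n"

lemma inv_left: "invertible (A::('n::finite) mt) \<Longrightarrow> matrix_inv A ** A = mat 1"
  unfolding invertible_def matrix_inv_def by (rule someI2_ex) auto

lemma inv_right: "invertible (A::('n::finite) mt) \<Longrightarrow> A ** matrix_inv A = mat 1"
  unfolding invertible_def matrix_inv_def by (rule someI2_ex) auto

lemma inv_unique:
  fixes M X :: "('n::finite) mt"
  assumes "X ** M = mat 1" "M ** X = mat 1"
  shows "matrix_inv M = X"
proof -
  have inv: "invertible M" using assms invertible_def by blast
  have "matrix_inv M = matrix_inv M ** (M ** X)" using assms by simp
  also have "\<dots> = (matrix_inv M ** M) ** X" by (simp add: matrix_mul_assoc)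
  also have "\<dots> = X" using inv_left[OF inv] by simp
  finally show ?thesis .
qed

lemma mat_diff_ldistrib: "(A::('n::finite) mt) ** (B - C) = A ** B - A ** C"
  by (simp add: matrix_matrix_mult_def vec_eq_iff sum_subtractf right_diff_distrib)

lemma mat_diff_rdistrib: "((B::('n::finite) mt) - C) ** A = B ** A - C ** A"
  by (simp add: matrix_matrix_mult_def vec_eq_iff sum_subtractf left_diff_distrib)

lemma mat_add_rdistrib: "((B::('n::finite) mt) + C) ** A = B ** A + C ** A"
  by (simp add: matrix_matrix_mult_def vec_eq_iff sum.distrib distrib_right)

lemma mm_entry: "((A::('n::finite) mt) ** B) $ i $ j = (\<Sum>k\<in>UNIV. A$i$k * B$k$j)"
  by (simp add: matrix_matrix_mult_def)

lemma mv_entry: "((A::('n::finite) mt) *v x) $ i = (\<Sum>j\<in>UNIV. A$i$j * x$j)"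
  by (simp add: matrix_vector_mult_def)

lemma vm_entry: "(x v* (A::('n::finite) mt)) $ j = (\<Sum>i\<in>UNIV. x$i * A$i$j)"
  by (simp add: vector_matrix_mult_def)

lemma mat1_entry: "(mat 1 :: ('n::finite) mt) $ i $ j = (if i = j then 1 else 0)"
  by (simp add: mat_def)

lemma nonneg_mult: "nonneg_mat (A::('n::finite) mt) \<Longrightarrow> nonneg_mat B \<Longrightarrow> nonneg_mat (A ** B)"
  unfolding nonneg_mat_def mm_entry by (auto intro!: sum_nonneg)

lemma nonneg_mat1: "nonneg_mat (mat 1 :: ('n::finite) mt)"
  unfolding nonneg_mat_def mat1_entry by auto

definition rs :: "('n::finite) mt \<Rightarrow> 'n \<Rightarrow> real" where
  "rs A i = (\<Sum>j\<in>UNIV. A$i$j)"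

lemma rs_mult: "rs ((A::('n::finite) mt) ** B) i = (\<Sum>k\<in>UNIV. A$i$k * rs B k)"
  unfolding rs_def mm_entry sum_distrib_left by (rule sum.swap)

lemma rs_mat1: "rs (mat 1 :: ('n::finite) mt) i = 1"
  unfolding rs_def mat1_entry by simp

lemma rs_diff: "rs ((A::('n::finite) mt) - B) i = rs A i - rs B i"
  unfolding rs_def by (simp add: sum_subtractf)

lemma rs_add: "rs ((A::('n::finite) mt) + B) i = rs A i + rs B i"
  unfolding rs_def by (simp add: sum.distrib)

lemma rs_ones: "((A::('n::finite) mt) *v ones) $ i = rs A i"
  unfolding rs_def mv_entry ones_def by simp

lemma entry_le_rs: "nonneg_mat (A::('n::finite) mt) \<Longrightarrow> A$i$j \<le> rs A i"
  unfolding rs_def nonneg_mat_def by (rule member_le_sum) auto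

lemma rs_nonneg: "nonneg_mat (A::('n::finite) mt) \<Longrightarrow> 0 \<le> rs A i"
  unfolding rs_def nonneg_mat_def by (auto intro: sum_nonneg)

lemma rs_mult_le:
  assumes "nonneg_mat (A::('n::finite) mt)" "\<forall>k. rs B k \<le> c"
  shows "rs (A ** B) i \<le> rs A i * c"
proof -
  have "rs (A ** B) i \<le> (\<Sum>k\<in>UNIV. A$i$k * c)" unfolding rs_mult
    using assms by (intro sum_mono mult_left_mono) (auto simp: nonneg_mat_def)
  also have "\<dots> = rs A i * c" by (simp add: rs_def sum_distrib_right)
  finally show ?thesis .
qed

lemma rs_mult_eq:
  assumes "\<forall>k. rs B k = 1"
  shows "rs ((A::('n::finite) mt) ** B) i = rs A i"
  unfolding rs_mult using assms by (simp add: rs_def)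

lemma maxprin:
  fixes N :: "('n::finite) mt" and y :: "real^'n"
  assumes N: "nonneg_mat N" and rsN: "\<forall>i. rs N i \<le> th" and th: "th < 1"
    and pos: "\<forall>i. 0 \<le> ((mat 1 - N) *v y) $ i"
  shows "0 \<le> y $ i"
proof (rule ccontr)
  assume neg: "\<not> 0 \<le> y $ i"
  define m where "m = Min (range (\<lambda>j. y$j))"
  have "m \<in> range (\<lambda>j. y$j)" unfolding m_def by (intro Min_in) auto
  then obtain i0 where i0: "y$i0 = m" by auto
  have mle: "\<forall>j. m \<le> y$j" unfolding m_def by auto
  have mneg: "m < 0" using mle[rule_format, of i] neg by auto
  have "((mat 1 - N) *v y) $ i0 = y$i0 - (\<Sum>j\<in>UNIV. N$i0$j * y$j)"
    by (simp add: matrix_vector_mult_diff_rdistrib mv_entry)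
  hence "m \<ge> (\<Sum>j\<in>UNIV. N$i0$j * y$j)" using pos i0 by (metis diff_ge_0_iff_ge)
  moreover have "(\<Sum>j\<in>UNIV. N$i0$j * y$j) \<ge> (\<Sum>j\<in>UNIV. N$i0$j * m)"
    using N mle by (intro sum_mono mult_left_mono) (auto simp: nonneg_mat_def)
  moreover have "(\<Sum>j\<in>UNIV. N$i0$j * m) = rs N i0 * m"
    by (simp add: rs_def sum_distrib_right)
  moreover have "rs N i0 * m > m"
  proof -
    have "rs N i0 < 1" using rsN th by (meson le_less_trans)
    hence "(1 - rs N i0) * m < 0" using mneg by (simp add: mult_pos_neg)
    thus ?thesis by (simp add: algebra_simps)
  qed
  ultimately show False by linarith
qed

lemma mmatrix:
  fixes N :: "('n::finite) mt"
  assumes N: "nonneg_mat N" and rsN: "\<forall>i. rs N i \<le> th" and th: "th < 1"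
  shows "invertible (mat 1 - N)" and "nonneg_mat (matrix_inv (mat 1 - N))"
    and "matrix_inv (mat 1 - N) = mat 1 + N ** matrix_inv (mat 1 - N)"
proof -
  have ker: "\<forall>x. (mat 1 - N) *v x = 0 \<longrightarrow> x = 0"
  proof (intro allI impI)
    fix x :: "real^'n" assume h: "(mat 1 - N) *v x = 0"
    have "0 \<le> x$i" for i using maxprin[OF N rsN th, of x] h by simp
    moreover have h2: "(mat 1 - N) *v (-x) = 0"
      using h matrix_vector_mult_diff_distrib[of "mat 1 - N" 0 x] by simp
    moreover have "0 \<le> (-x)$i" for i using maxprin[OF N rsN th, of "-x"] h2 by simp
    ultimately show "x = 0" by (simp add: vec_eq_iff) (meson antisym neg_0_le_iff_le)
  qed
  show inv: "invertible (mat 1 - N)"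
    using ker matrix_left_invertible_ker invertible_left_inverse by blast
  define H where "H = matrix_inv (mat 1 - N)"
  have r: "(mat 1 - N) ** H = mat 1" using inv_right[OF inv] H_def by simp
  show "nonneg_mat (matrix_inv (mat 1 - N))"
    unfolding nonneg_mat_def H_def[symmetric]
  proof (intro allI)
    fix i j
    have "(mat 1 - N) *v (H *v axis j 1) = axis j 1"
      by (simp add: matrix_vector_mul_assoc r)
    hence "0 \<le> (H *v axis j 1) $ i"
      by (intro maxprin[OF N rsN th]) (simp add: axis_def)
    thus "0 \<le> H $ i $ j" by (simp add: mv_entry axis_def if_distrib cong: if_cong)
  qed
  have "H - N ** H = mat 1" using r by (simp add: mat_diff_rdistrib)
  thus "matrix_inv (mat 1 - N) = mat 1 + N ** matrix_inv (mat 1 - N)"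
    unfolding H_def[symmetric] by (metis add.commute diff_eq_eq)
qed



definition good :: "('n::finite) mt \<Rightarrow> 'n mt \<Rightarrow> real \<Rightarrow> bool" where
  "good Pt Qt e \<longleftrightarrow> 0 < e \<and> (\<forall>i j. e \<le> Pt$i$j) \<and> nonneg_mat Qt \<and> (\<forall>i. rs Pt i + rs Qt i = 1)"

definition Dm :: "('n::finite) mt \<Rightarrow> bool" where
  "Dm A \<longleftrightarrow> nonneg_mat A \<and> (\<forall>i. rs A i \<le> 1)"

definition St :: "('n::finite) mt \<Rightarrow> bool" where
  "St A \<longleftrightarrow> nonneg_mat A \<and> (\<forall>i. rs A i = 1)"

definition gmap :: "('n::finite) mt \<Rightarrow> 'n mt \<Rightarrow> 'n mt \<Rightarrow> 'n mt" where
  "gmap Pt Qt A = matrix_inv (mat 1 - Qt ** A) ** Pt"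

lemma St_Dm: "St A \<Longrightarrow> Dm A" unfolding St_def Dm_def by auto

lemma Dm_le1: "Dm A \<Longrightarrow> A$i$j \<le> 1"
  unfolding Dm_def using entry_le_rs by (meson order_trans)

lemma Dm_0: "Dm (0::('n::finite) mt)" unfolding Dm_def nonneg_mat_def rs_def by simp

lemma St_1: "St (mat 1::('n::finite) mt)" unfolding St_def using nonneg_mat1 rs_mat1 by auto

lemma good_Pt_nonneg: "good Pt Qt e \<Longrightarrow> nonneg_mat Pt"
  unfolding good_def nonneg_mat_def by (meson less_le_trans less_imp_le order_trans)

lemma good_e_pos: "good Pt Qt e \<Longrightarrow> 0 < e" unfolding good_def by auto

lemma good_rsQt: "good Pt Qt e \<Longrightarrow> rs Qt i \<le> 1 - e"
proof -
  assume g: "good Pt Qt e"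
  have "Pt$i$i \<le> rs Pt i" using entry_le_rs[OF good_Pt_nonneg[OF g]] .
  moreover have "e \<le> Pt$i$i" using g unfolding good_def by auto
  moreover have "rs Pt i + rs Qt i = 1" using g unfolding good_def by blast
  ultimately show ?thesis by linarith
qed

lemma good_e_le1: "good Pt Qt e \<Longrightarrow> e \<le> 1"
proof -
  assume g: "good Pt Qt e"
  have "rs Qt undefined \<le> 1 - e" using good_rsQt[OF g] .
  moreover have "0 \<le> rs Qt undefined" using g rs_nonneg unfolding good_def by blast
  ultimately show ?thesis by linarith
qed

lemma N_props:
  assumes g: "good Pt Qt e" and D: "Dm A"
  shows "nonneg_mat (Qt ** A)" "rs (Qt ** A) i \<le> 1 - e"
proof -
  show "nonneg_mat (Qt ** A)" using g D nonneg_mult unfolding good_def Dm_def by blast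
  have "rs (Qt ** A) i \<le> rs Qt i * 1" using rs_mult_le[of Qt A] g D unfolding good_def Dm_def by blast
  thus "rs (Qt ** A) i \<le> 1 - e" using good_rsQt[OF g, of i] by simp
qed

lemma H_props:
  assumes g: "good Pt Qt e" and D: "Dm A"
  shows "invertible (mat 1 - Qt ** A)" "nonneg_mat (matrix_inv (mat 1 - Qt ** A))"
    "matrix_inv (mat 1 - Qt ** A) = mat 1 + (Qt ** A) ** matrix_inv (mat 1 - Qt ** A)"
proof -
  have th: "1 - e < 1" using good_e_pos[OF g] by simp
  note N = N_props[OF g D]
  show "invertible (mat 1 - Qt ** A)" using mmatrix(1)[OF N(1) _ th] N(2) by blast
  show "nonneg_mat (matrix_inv (mat 1 - Qt ** A))" using mmatrix(2)[OF N(1) _ th] N(2) by blast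
  show "matrix_inv (mat 1 - Qt ** A) = mat 1 + (Qt ** A) ** matrix_inv (mat 1 - Qt ** A)"
    using mmatrix(3)[OF N(1) _ th] N(2) by blast
qed

lemma g_ge:
  assumes g: "good Pt Qt e" and D: "Dm A"
  shows "Pt$i$j \<le> gmap Pt Qt A $i$j" "e \<le> gmap Pt Qt A $i$j"
proof -
  define H where "H = matrix_inv (mat 1 - Qt ** A)"
  have "gmap Pt Qt A = Pt + (Qt ** A) ** H ** Pt"
    unfolding gmap_def H_def[symmetric]
    by (subst H_def, subst H_props(3)[OF g D], simp add: mat_add_rdistrib H_def)
  moreover have "nonneg_mat ((Qt ** A) ** H ** Pt)"
    using N_props(1)[OF g D] H_props(2)[OF g D] good_Pt_nonneg[OF g] nonneg_mult unfolding H_def by blast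
  ultimately show "Pt$i$j \<le> gmap Pt Qt A $i$j" unfolding nonneg_mat_def by simp
  moreover have "e \<le> Pt$i$j" using g unfolding good_def by blast
  ultimately show "e \<le> gmap Pt Qt A $i$j" by linarith
qed

lemma g_rs:
  assumes g: "good Pt Qt e" and D: "Dm A"
  shows "rs (gmap Pt Qt A) i \<le> 1" "St A \<Longrightarrow> rs (gmap Pt Qt A) i = 1"
proof -
  define H where "H = matrix_inv (mat 1 - Qt ** A)"
  have Hn: "nonneg_mat H" using H_props(2)[OF g D] H_def by simp
  have HL: "H ** (mat 1 - Qt ** A) = mat 1" using inv_left[OF H_props(1)[OF g D]] H_def by simp
  have le: "rs Pt k \<le> rs (mat 1 - Qt ** A) k" for k
  proof -
    have "rs (Qt ** A) k \<le> rs Qt k * 1" using rs_mult_le[of Qt A] g D unfolding good_def Dm_def by blast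
    moreover have "rs Pt k + rs Qt k = 1" using g unfolding good_def by blast
    ultimately show ?thesis by (simp add: rs_diff rs_mat1)
  qed
  have "rs (gmap Pt Qt A) i = (\<Sum>k\<in>UNIV. H$i$k * rs Pt k)" unfolding gmap_def H_def[symmetric] rs_mult ..
  also have "\<dots> \<le> (\<Sum>k\<in>UNIV. H$i$k * rs (mat 1 - Qt ** A) k)"
    using Hn le by (intro sum_mono mult_left_mono) (auto simp: nonneg_mat_def)
  also have "\<dots> = 1" using HL rs_mult[of H "mat 1 - Qt ** A" i] rs_mat1 by metis
  finally show "rs (gmap Pt Qt A) i \<le> 1" .
  assume S: "St A"
  have eq: "rs Pt k = rs (mat 1 - Qt ** A) k" for k
  proof -
    have "rs (Qt ** A) k = rs Qt k" using S rs_mult_eq[of A Qt k] unfolding St_def by blast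
    moreover have "rs Pt k + rs Qt k = 1" using g unfolding good_def by blast
    ultimately show ?thesis by (simp add: rs_diff rs_mat1)
  qed
  have "rs (gmap Pt Qt A) i = (\<Sum>k\<in>UNIV. H$i$k * rs (mat 1 - Qt ** A) k)" unfolding gmap_def H_def[symmetric] rs_mult eq ..
  also have "\<dots> = 1" using HL rs_mult[of H "mat 1 - Qt ** A" i] rs_mat1 by metis
  finally show "rs (gmap Pt Qt A) i = 1" .
qed

lemma g_Dm: "good Pt Qt e \<Longrightarrow> Dm A \<Longrightarrow> Dm (gmap Pt Qt A)"
proof -
  assume g: "good Pt Qt e" and D: "Dm A"
  have "0 \<le> gmap Pt Qt A $i$j" for i j using g_ge(2)[OF g D, of i j] good_e_pos[OF g] by linarith
  thus ?thesis unfolding Dm_def[of "gmap Pt Qt A"] nonneg_mat_def using g_rs(1)[OF g D] by blast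
qed

lemma g_St: "good Pt Qt e \<Longrightarrow> St A \<Longrightarrow> St (gmap Pt Qt A)"
proof -
  assume g: "good Pt Qt e" and S: "St A"
  have D: "Dm A" using S St_Dm by blast
  show ?thesis using g_Dm[OF g D] g_rs(2)[OF g D S] unfolding St_def Dm_def by blast
qed

lemma g_diff:
  assumes g: "good Pt Qt e" and D: "Dm A" and D': "Dm B"
  shows "gmap Pt Qt A - gmap Pt Qt B = matrix_inv (mat 1 - Qt ** A) ** Qt ** (A - B) ** gmap Pt Qt B"
proof -
  define H where "H = matrix_inv (mat 1 - Qt ** A)"
  define H' where "H' = matrix_inv (mat 1 - Qt ** B)"
  have HL: "H ** (mat 1 - Qt ** A) = mat 1" using inv_left[OF H_props(1)[OF g D]] H_def by simp
  have HR: "(mat 1 - Qt ** B) ** H' = mat 1" using inv_right[OF H_props(1)[OF g D']] H'_def by simp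
  have "H - H' = H ** ((mat 1 - Qt ** B) ** H') - (H ** (mat 1 - Qt ** A)) ** H'"
    using HL HR by simp
  also have "\<dots> = H ** ((mat 1 - Qt ** B) - (mat 1 - Qt ** A)) ** H'"
    by (simp add: matrix_mul_assoc mat_diff_ldistrib mat_diff_rdistrib)
  also have "(mat 1 - Qt ** B) - (mat 1 - Qt ** A) = Qt ** (A - B)"
    by (simp add: mat_diff_ldistrib)
  finally have "H - H' = H ** Qt ** (A - B) ** H'" by (simp add: matrix_mul_assoc)
  hence "(H - H') ** Pt = H ** Qt ** (A - B) ** (H' ** Pt)" by (simp add: matrix_mul_assoc)
  thus ?thesis unfolding gmap_def H_def[symmetric] H'_def[symmetric] by (simp add: mat_diff_rdistrib)
qed



lemma ratio_step:
  fixes x y :: "real^'n::finite" and M :: "'n mt"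
  assumes y: "\<forall>k. 0 \<le> y$k" and S: "0 < (\<Sum>k\<in>UNIV. y$k)"
    and M: "\<forall>k j. e \<le> M$k$j \<and> M$k$j \<le> 1" and e: "0 < e"
    and lo: "\<forall>k. lo * y$k \<le> x$k \<and> x$k \<le> (lo + t) * y$k" and t: "0 \<le> t"
  shows "\<exists>lo'. lo \<le> lo' \<and> (\<forall>j. lo' * (y v* M)$j \<le> (x v* M)$j \<and>
            (x v* M)$j \<le> (lo' + (1-e)*t) * (y v* M)$j)"
proof -
  define Sy where "Sy = (\<Sum>k\<in>UNIV. y$k)"
  define u where "u k = x$k - lo * y$k" for k
  define D where "D = (\<Sum>k\<in>UNIV. u k)"
  have u0: "0 \<le> u k" and ut: "u k \<le> t * y$k" for k using lo unfolding u_def by (auto simp: algebra_simps)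
  have D0: "0 \<le> D" unfolding D_def using u0 by (simp add: sum_nonneg)
  have Sy0: "0 < Sy" using S Sy_def by simp
  define lo' where "lo' = lo + e * D / Sy"
  have "lo \<le> lo'" unfolding lo'_def using e D0 Sy0 by simp
  moreover have "lo' * (y v* M)$j \<le> (x v* M)$j \<and> (x v* M)$j \<le> (lo' + (1-e)*t) * (y v* M)$j" for j
  proof -
    define W where "W = (y v* M)$j"
    have W: "W = (\<Sum>k\<in>UNIV. y$k * M$k$j)" unfolding W_def vm_entry ..
    have W0: "0 \<le> W" unfolding W using y M e by (auto intro!: sum_nonneg mult_nonneg_nonneg
          intro: less_imp_le order_trans)
    have WS: "W \<le> Sy" unfolding W Sy_def using y M by (intro sum_mono) (simp add: mult_left_le)
    have X: "(x v* M)$j - lo * W = (\<Sum>k\<in>UNIV. u k * M$k$j)"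
      unfolding W vm_entry u_def by (simp add: sum_subtractf sum_distrib_left algebra_simps)
    have low: "(\<Sum>k\<in>UNIV. u k * M$k$j) \<ge> e * D"
      unfolding D_def sum_distrib_left
    proof (intro sum_mono)
      fix k show "e * u k \<le> u k * M$k$j" using mult_left_mono[of e "M$k$j" "u k"] u0[of k] M
        by (simp add: mult.commute)
    qed
    have r: "W / Sy \<le> 1" using WS Sy0 by simp
    have r0: "0 \<le> W / Sy" using W0 Sy0 by simp
    have "e * D * (W / Sy) \<le> e * D" by (rule mult_left_le[OF r]) (use D0 e in simp)
    hence lower: "lo' * W \<le> (x v* M)$j" using X low unfolding lo'_def by (simp add: algebra_simps)
    have eM: "e * (W / Sy) \<le> M$k$j" for k using M r e
      by (meson mult_left_le less_imp_le order_trans)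
    have "(\<Sum>k\<in>UNIV. u k * M$k$j) = (\<Sum>k\<in>UNIV. u k * (M$k$j - e * (W/Sy))) + e * (W/Sy) * D"
      unfolding D_def by (simp add: sum_subtractf sum_distrib_left sum_divide_distrib algebra_simps)
    also have "(\<Sum>k\<in>UNIV. u k * (M$k$j - e * (W/Sy))) \<le> (\<Sum>k\<in>UNIV. t * y$k * (M$k$j - e * (W/Sy)))"
      using ut eM by (intro sum_mono mult_right_mono) auto
    also have "(\<Sum>k\<in>UNIV. t * y$k * (M$k$j - e * (W/Sy))) = t * W - t * e * (W / Sy) * Sy"
    proof -
      define c where "c = e * (W/Sy)"
      have "(\<Sum>k\<in>UNIV. t * y$k * (M$k$j - c)) = t * (\<Sum>k\<in>UNIV. y$k * M$k$j) - t * c * (\<Sum>k\<in>UNIV. y$k)"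
        by (simp add: sum_subtractf sum_distrib_left algebra_simps)
      thus ?thesis unfolding c_def W[symmetric] Sy_def[symmetric] by (simp add: algebra_simps)
    qed
    also have "t * W - t * e * (W / Sy) * Sy = (1 - e) * t * W" using Sy0 by (simp add: algebra_simps)
    finally have "(x v* M)$j - lo * W \<le> (1 - e) * t * W + e * (W/Sy) * D" using X by linarith
    hence upper: "(x v* M)$j \<le> (lo' + (1-e)*t) * W" unfolding lo'_def by (simp add: algebra_simps)
    show ?thesis using lower upper W_def by simp
  qed
  ultimately show ?thesis by blast
qed

lemma norm_close:
  fixes x y :: "real^'n::finite"
  assumes y: "\<forall>k. 0 \<le> y$k" and S: "0 < (\<Sum>k\<in>UNIV. y$k)" and lo0: "0 < lo" and t: "0 \<le> t"
    and lo: "\<forall>k. lo * y$k \<le> x$k \<and> x$k \<le> (lo + t) * y$k"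
  shows "\<bar>x$j / (\<Sum>k\<in>UNIV. x$k) - y$j / (\<Sum>k\<in>UNIV. y$k)\<bar> \<le> t / lo"
proof -
  define Sy where "Sy = (\<Sum>k\<in>UNIV. y$k)"
  define Sx where "Sx = (\<Sum>k\<in>UNIV. x$k)"
  have Sy0: "0 < Sy" using S Sy_def by simp
  have Sx1: "lo * Sy \<le> Sx" unfolding Sx_def Sy_def sum_distrib_left using lo by (intro sum_mono) auto
  have Sx2: "Sx \<le> (lo + t) * Sy" unfolding Sx_def Sy_def sum_distrib_left using lo by (intro sum_mono) auto
  have Sx0: "0 < Sx" using Sx1 lo0 Sy0 by (smt (verit) mult_pos_pos)
  have yj: "0 \<le> y$j" "y$j \<le> Sy" using y unfolding Sy_def by (auto intro: member_le_sum)
  have q: "0 \<le> y$j / Sy" "y$j / Sy \<le> 1" using yj Sy0 by auto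
  have up: "x$j / Sx \<le> (lo + t) * y$j / (lo * Sy)"
  proof -
    have "x$j / Sx \<le> (lo + t) * y$j / Sx" using lo Sx0 by (simp add: divide_right_mono)
    also have "\<dots> \<le> (lo + t) * y$j / (lo * Sy)"
      using Sx1 Sy0 lo0 t yj Sx0 by (intro divide_left_mono) (auto intro: mult_pos_pos)
    finally show ?thesis .
  qed
  have "(lo + t) * y$j / (lo * Sy) = y$j / Sy + (t / lo) * (y$j / Sy)" using lo0 Sy0
    by (simp add: field_simps)
  hence a: "x$j / Sx - y$j / Sy \<le> t / lo" using up q lo0 t
    by (smt (verit) mult_left_le divide_nonneg_pos)
  have dn: "lo * y$j / ((lo + t) * Sy) \<le> x$j / Sx"
  proof -
    have "lo * y$j / ((lo + t) * Sy) \<le> lo * y$j / Sx"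
      using Sx2 Sx0 lo0 yj by (intro divide_left_mono) auto
    also have "\<dots> \<le> x$j / Sx" using lo Sx0 by (simp add: divide_right_mono)
    finally show ?thesis .
  qed
  have lt: "0 < lo + t" using lo0 t by simp
  have e1: "lo * y$j / ((lo + t) * Sy) = (y$j / Sy) * (lo / (lo + t))" by (simp add: ac_simps)
  have e2: "lo / (lo + t) = 1 - t / (lo + t)" using lt by (simp add: field_simps)
  have "lo * y$j / ((lo + t) * Sy) = y$j / Sy - (t / (lo + t)) * (y$j / Sy)"
    unfolding e1 e2 by (simp add: algebra_simps)
  moreover have "t / (lo + t) \<le> t / lo" using lo0 t by (intro divide_left_mono) auto
  moreover have "(t / (lo + t)) * (y$j / Sy) \<le> t / (lo + t)"
    by (rule mult_left_le[OF q(2)]) (use lt t in simp)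
  ultimately have b: "y$j / Sy - x$j / Sx \<le> t / lo" using dn by linarith
  show ?thesis using a b unfolding Sx_def Sy_def by (simp add: abs_le_iff)
qed



fun itr :: "(int \<Rightarrow> ('n::finite) mt) \<Rightarrow> (int \<Rightarrow> 'n mt) \<Rightarrow> int \<Rightarrow> 'n mt \<Rightarrow> nat \<Rightarrow> 'n mt" where
  "itr Pt Qt b B 0 = B"
| "itr Pt Qt b B (Suc k) = gmap (Pt (b + int k + 1)) (Qt (b + int k + 1)) (itr Pt Qt b B k)"

fun Kp :: "(int \<Rightarrow> ('n::finite) mt) \<Rightarrow> (int \<Rightarrow> 'n mt) \<Rightarrow> int \<Rightarrow> nat \<Rightarrow> 'n mt" where
  "Kp Pt Qt b 0 = mat 1"
| "Kp Pt Qt b (Suc k) = Kp Pt Qt b k ** itr Pt Qt b 0 (Suc k)"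

lemma itr_comp: "itr Pt Qt b B (j + k) = itr Pt Qt (b + int j) (itr Pt Qt b B j) k"
  by (induct k) (simp_all add: algebra_simps)

lemma row_mult: "((A::('n::finite) mt) ** M) $ l = (A $ l) v* M"
  by (simp add: vec_eq_iff matrix_matrix_mult_def vector_matrix_mult_def)

locale envt =
  fixes Pt Qt :: "int \<Rightarrow> ('n::finite) mt" and e :: real
  assumes gd: "\<And>n. good (Pt n) (Qt n) e"
begin

lemma e_pos: "0 < e" using good_e_pos[OF gd] .
lemma e_le1: "e \<le> 1" using good_e_le1[OF gd] .

lemma itr_Dm: "Dm B \<Longrightarrow> Dm (itr Pt Qt b B k)"
  by (induct k) (auto intro: g_Dm[OF gd])

lemma itr_St: "St B \<Longrightarrow> St (itr Pt Qt b B k)"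
  by (induct k) (auto intro: g_St[OF gd])

lemma itr_ge: "Dm B \<Longrightarrow> e \<le> itr Pt Qt b B (Suc k) $i$j"
  using g_ge(2)[OF gd itr_Dm] by simp

lemma itr_le1: "Dm B \<Longrightarrow> itr Pt Qt b B k $i$j \<le> 1"
  using Dm_le1[OF itr_Dm] by simp

lemma decomp:
  assumes D: "Dm B"
  shows "\<exists>C. nonneg_mat C \<and> itr Pt Qt b B k = itr Pt Qt b 0 k + C ** Kp Pt Qt b k"
proof (induct k)
  case 0
  show ?case using D unfolding Dm_def by (intro exI[of _ B]) simp
next
  case (Suc k)
  then obtain C where C: "nonneg_mat C" and eq: "itr Pt Qt b B k = itr Pt Qt b 0 k + C ** Kp Pt Qt b k" by blast
  define n where "n = b + int k + 1"
  define A where "A = itr Pt Qt b B k"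
  define Z where "Z = itr Pt Qt b 0 k"
  have DA: "Dm A" using itr_Dm[OF D] A_def by simp
  have DZ: "Dm Z" using itr_Dm[OF Dm_0] Z_def by simp
  define H where "H = matrix_inv (mat 1 - Qt n ** A)"
  have Hn: "nonneg_mat H" using H_props(2)[OF gd DA] H_def by simp
  have Qn: "nonneg_mat (Qt n)" using gd unfolding good_def by blast
  have "itr Pt Qt b B (Suc k) - itr Pt Qt b 0 (Suc k) = gmap (Pt n) (Qt n) A - gmap (Pt n) (Qt n) Z"
    by (simp add: n_def A_def Z_def)
  also have "\<dots> = H ** Qt n ** (A - Z) ** gmap (Pt n) (Qt n) Z"
    using g_diff[OF gd DA DZ] H_def by simp
  also have "A - Z = C ** Kp Pt Qt b k" using eq A_def Z_def by simp
  also have "H ** Qt n ** (C ** Kp Pt Qt b k) ** gmap (Pt n) (Qt n) Z = (H ** Qt n ** C) ** Kp Pt Qt b (Suc k)"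
    by (simp add: matrix_mul_assoc n_def Z_def)
  finally have "itr Pt Qt b B (Suc k) = itr Pt Qt b 0 (Suc k) + (H ** Qt n ** C) ** Kp Pt Qt b (Suc k)"
    by (simp add: algebra_simps)
  moreover have "nonneg_mat (H ** Qt n ** C)" using Hn Qn C nonneg_mult by blast
  ultimately show ?case by blast
qed

lemma Kp_pos: "0 < Kp Pt Qt b (Suc k) $ l $ j"
proof (induct k arbitrary: j)
  case 0
  show ?case using itr_ge[OF Dm_0, of b 0 l j] e_pos by simp
next
  case (Suc k)
  have "Kp Pt Qt b (Suc (Suc k)) $ l $ j = (\<Sum>i\<in>UNIV. Kp Pt Qt b (Suc k) $ l $ i * itr Pt Qt b 0 (Suc (Suc k)) $ i $ j)"
    by (simp only: Kp.simps mm_entry)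
  also have "\<dots> > 0"
  proof (rule sum_pos)
    fix i show "0 < Kp Pt Qt b (Suc k) $ l $ i * itr Pt Qt b 0 (Suc (Suc k)) $ i $ j"
      using Suc[of i] itr_ge[OF Dm_0, of b "Suc k" i j] e_pos by simp
  qed auto
  finally show ?case .
qed

lemma Kp_rows:
  "\<exists>lo. e \<le> lo \<and> (\<forall>j. lo * Kp Pt Qt b (Suc k) $ l' $ j \<le> Kp Pt Qt b (Suc k) $ l $ j \<and>
        Kp Pt Qt b (Suc k) $ l $ j \<le> (lo + (1-e)^k / e) * Kp Pt Qt b (Suc k) $ l' $ j)"
proof (induct k)
  case 0
  have K1: "Kp Pt Qt b (Suc 0) = itr Pt Qt b 0 (Suc 0)" by simp
  have lb: "e \<le> itr Pt Qt b 0 (Suc 0) $ i $ j" for i j using itr_ge[OF Dm_0, of b 0 i j] by simp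
  have ub: "itr Pt Qt b 0 (Suc 0) $ i $ j \<le> 1" for i j using itr_le1[OF Dm_0, of b "Suc 0" i j] by simp
  have "e * itr Pt Qt b 0 (Suc 0) $ l' $ j \<le> itr Pt Qt b 0 (Suc 0) $ l $ j \<and>
        itr Pt Qt b 0 (Suc 0) $ l $ j \<le> (e + 1 / e) * itr Pt Qt b 0 (Suc 0) $ l' $ j" for j
  proof
    have "e * itr Pt Qt b 0 (Suc 0) $ l' $ j \<le> e * 1" using ub e_pos by (intro mult_left_mono) auto
    thus "e * itr Pt Qt b 0 (Suc 0) $ l' $ j \<le> itr Pt Qt b 0 (Suc 0) $ l $ j" using lb[of l j] by simp
    have "1 \<le> (1 / e) * itr Pt Qt b 0 (Suc 0) $ l' $ j" using lb[of l' j] e_pos by (simp add: field_simps)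
    moreover have "0 \<le> e * itr Pt Qt b 0 (Suc 0) $ l' $ j" using lb[of l' j] e_pos by simp
    ultimately show "itr Pt Qt b 0 (Suc 0) $ l $ j \<le> (e + 1 / e) * itr Pt Qt b 0 (Suc 0) $ l' $ j"
      using ub[of l j] by (simp add: algebra_simps)
  qed
  thus ?case unfolding K1 by (intro exI[of _ e]) simp
next
  case (Suc k)
  then obtain lo where lo: "e \<le> lo" and h: "\<forall>j. lo * Kp Pt Qt b (Suc k) $ l' $ j \<le> Kp Pt Qt b (Suc k) $ l $ j \<and>
        Kp Pt Qt b (Suc k) $ l $ j \<le> (lo + (1-e)^k / e) * Kp Pt Qt b (Suc k) $ l' $ j" by blast
  define M where "M = itr Pt Qt b 0 (Suc (Suc k))"
  have M: "\<forall>i j. e \<le> M$i$j \<and> M$i$j \<le> 1" using itr_ge[OF Dm_0, of b "Suc k"] itr_le1[OF Dm_0, of b "Suc (Suc k)"] unfolding M_def by blast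
  have y: "\<forall>i. 0 \<le> Kp Pt Qt b (Suc k) $ l' $ i" using Kp_pos less_imp_le by blast
  have S: "0 < (\<Sum>i\<in>UNIV. Kp Pt Qt b (Suc k) $ l' $ i)" using Kp_pos by (intro sum_pos) auto
  have t: "0 \<le> (1-e)^k / e" using e_pos e_le1 by simp
  obtain lo' where lo': "lo \<le> lo'" and h': "\<forall>j. lo' * (Kp Pt Qt b (Suc k) $ l' v* M)$j \<le> (Kp Pt Qt b (Suc k) $ l v* M)$j \<and>
            (Kp Pt Qt b (Suc k) $ l v* M)$j \<le> (lo' + (1-e)*((1-e)^k / e)) * (Kp Pt Qt b (Suc k) $ l' v* M)$j"
    using ratio_step[OF y S M e_pos _ t] h by blast
  have KS: "Kp Pt Qt b (Suc (Suc k)) $ i = Kp Pt Qt b (Suc k) $ i v* M" for i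
    unfolding M_def by (simp only: Kp.simps row_mult)
  have eq: "(1-e)*((1-e)^k / e) = (1-e)^(Suc k) / e" by simp
  show ?case unfolding KS using lo lo' h' eq by (intro exI[of _ lo']) auto
qed

lemma Kp_close:
  "\<bar>Kp Pt Qt b (Suc k) $ l $ j / rs (Kp Pt Qt b (Suc k)) l - Kp Pt Qt b (Suc k) $ l' $ j / rs (Kp Pt Qt b (Suc k)) l'\<bar>
     \<le> (1-e)^k / e / e"
proof -
  obtain lo where lo: "e \<le> lo" and h: "\<forall>j. lo * Kp Pt Qt b (Suc k) $ l' $ j \<le> Kp Pt Qt b (Suc k) $ l $ j \<and>
        Kp Pt Qt b (Suc k) $ l $ j \<le> (lo + (1-e)^k / e) * Kp Pt Qt b (Suc k) $ l' $ j"
    using Kp_rows by blast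
  have y: "\<forall>i. 0 \<le> Kp Pt Qt b (Suc k) $ l' $ i" using Kp_pos less_imp_le by blast
  have S: "0 < (\<Sum>i\<in>UNIV. Kp Pt Qt b (Suc k) $ l' $ i)" using Kp_pos by (intro sum_pos) auto
  have t: "0 \<le> (1-e)^k / e" using e_pos e_le1 by simp
  have lo0: "0 < lo" using lo e_pos by simp
  have "\<bar>Kp Pt Qt b (Suc k) $ l $ j / rs (Kp Pt Qt b (Suc k)) l - Kp Pt Qt b (Suc k) $ l' $ j / rs (Kp Pt Qt b (Suc k)) l'\<bar>
     \<le> (1-e)^k / e / lo"
    using norm_close[OF y S lo0 t h] unfolding rs_def by simp
  also have "\<dots> \<le> (1-e)^k / e / e" using lo e_pos t by (intro divide_left_mono) auto
  finally show ?thesis .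
qed

end



context envt begin

lemma itr_close:
  assumes SB: "St B" and SB': "St B'"
  shows "\<bar>itr Pt Qt b B (Suc k) $i$j - itr Pt Qt b B' (Suc k) $i$j\<bar> \<le> 2 * ((1-e)^k / e / e)"
proof -
  obtain C where C: "nonneg_mat C" and X: "itr Pt Qt b B (Suc k) = itr Pt Qt b 0 (Suc k) + C ** Kp Pt Qt b (Suc k)"
    using decomp[OF St_Dm[OF SB]] by blast
  obtain C' where C': "nonneg_mat C'" and X': "itr Pt Qt b B' (Suc k) = itr Pt Qt b 0 (Suc k) + C' ** Kp Pt Qt b (Suc k)"
    using decomp[OF St_Dm[OF SB']] by blast
  define K where "K = Kp Pt Qt b (Suc k)"
  define ph where "ph = itr Pt Qt b 0 (Suc k)"
  define s where "s l = rs K l" for l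
  define d where "d = (1-e)^k / e / e"
  define l0 :: 'n where "l0 = undefined"
  have s0: "0 < s l" for l unfolding s_def rs_def K_def using Kp_pos by (intro sum_pos) auto
  have close: "\<bar>K$l$j / s l - K$l0$j / s l0\<bar> \<le> d" for l unfolding K_def s_def d_def by (rule Kp_close)
  have d0: "0 \<le> d" unfolding d_def using e_pos e_le1 by simp
  have phn: "0 \<le> rs ph i" using itr_Dm[OF Dm_0, of b "Suc k"] rs_nonneg unfolding ph_def Dm_def by blast
  have r1: "rs ph i + (\<Sum>l\<in>UNIV. C$i$l * s l) = 1"
    using itr_St[OF SB, of b "Suc k"] X unfolding St_def s_def K_def ph_def by (simp add: rs_add rs_mult)
  have r2: "rs ph i + (\<Sum>l\<in>UNIV. C'$i$l * s l) = 1"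
    using itr_St[OF SB', of b "Suc k"] X' unfolding St_def s_def K_def ph_def by (simp add: rs_add rs_mult)
  have z: "(\<Sum>l\<in>UNIV. (C$i$l - C'$i$l) * s l) = 0"
    using r1 r2 by (simp add: sum_subtractf left_diff_distrib)
  have "itr Pt Qt b B (Suc k) $i$j - itr Pt Qt b B' (Suc k) $i$j = (\<Sum>l\<in>UNIV. (C$i$l - C'$i$l) * K$l$j)"
    unfolding X X' K_def by (simp add: mm_entry sum_subtractf left_diff_distrib)
  also have "\<dots> = (\<Sum>l\<in>UNIV. (C$i$l - C'$i$l) * s l * (K$l$j / s l - K$l0$j / s l0))
                 + (\<Sum>l\<in>UNIV. (C$i$l - C'$i$l) * s l) * (K$l0$j / s l0)"
  proof -
    have "(C$i$l - C'$i$l) * K$l$j = (C$i$l - C'$i$l) * s l * (K$l$j / s l - K$l0$j / s l0)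
            + (C$i$l - C'$i$l) * s l * (K$l0$j / s l0)" for l
      using s0[of l] s0[of l0] by (simp add: field_simps)
    thus ?thesis by (simp add: sum.distrib sum_distrib_right sum_divide_distrib)
  qed
  also have "\<dots> = (\<Sum>l\<in>UNIV. (C$i$l - C'$i$l) * s l * (K$l$j / s l - K$l0$j / s l0))"
    using z by simp
  finally have eq: "itr Pt Qt b B (Suc k) $i$j - itr Pt Qt b B' (Suc k) $i$j =
      (\<Sum>l\<in>UNIV. (C$i$l - C'$i$l) * s l * (K$l$j / s l - K$l0$j / s l0))" .
  have "\<bar>\<Sum>l\<in>UNIV. (C$i$l - C'$i$l) * s l * (K$l$j / s l - K$l0$j / s l0)\<bar>
      \<le> (\<Sum>l\<in>UNIV. \<bar>(C$i$l - C'$i$l) * s l * (K$l$j / s l - K$l0$j / s l0)\<bar>)"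
    by (rule sum_abs)
  also have "\<dots> \<le> (\<Sum>l\<in>UNIV. (C$i$l + C'$i$l) * s l * d)"
  proof (rule sum_mono)
    fix l
    have a: "\<bar>C$i$l - C'$i$l\<bar> \<le> C$i$l + C'$i$l" using C C' unfolding nonneg_mat_def by (simp add: abs_le_iff)
    have "\<bar>(C$i$l - C'$i$l) * s l * (K$l$j / s l - K$l0$j / s l0)\<bar>
        = \<bar>C$i$l - C'$i$l\<bar> * s l * \<bar>K$l$j / s l - K$l0$j / s l0\<bar>" using s0[of l] by (simp add: abs_mult)
    also have "\<dots> \<le> (C$i$l + C'$i$l) * s l * d"
      using a close[of l] s0[of l] by (intro mult_mono) (auto intro: mult_nonneg_nonneg)
    finally show "\<bar>(C$i$l - C'$i$l) * s l * (K$l$j / s l - K$l0$j / s l0)\<bar> \<le> (C$i$l + C'$i$l) * s l * d" .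
  qed
  also have "\<dots> = ((\<Sum>l\<in>UNIV. C$i$l * s l) + (\<Sum>l\<in>UNIV. C'$i$l * s l)) * d"
    by (simp add: sum.distrib sum_distrib_right distrib_right)
  also have "\<dots> \<le> 2 * d" using r1 r2 phn d0 by (intro mult_right_mono) auto
  finally show ?thesis using eq d_def by simp
qed

end



lemma norm_mt_le: "norm (A::('n::finite) mt) \<le> (\<Sum>i\<in>UNIV. \<Sum>j\<in>UNIV. \<bar>A$i$j\<bar>)"
proof -
  have "norm A \<le> (\<Sum>i\<in>UNIV. \<bar>norm (A$i)\<bar>)"
    unfolding norm_vec_def by (simp add: L2_set_le_sum)
  also have "\<dots> \<le> (\<Sum>i\<in>UNIV. \<Sum>j\<in>UNIV. \<bar>A$i$j\<bar>)" using norm_le_l1_cart by (intro sum_mono) simp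
  finally show ?thesis .
qed

lemma norm_mt_bound:
  assumes "\<forall>i j. \<bar>(A::('n::finite) mt)$i$j\<bar> \<le> c"
  shows "norm A \<le> real CARD('n) * real CARD('n) * c"
proof -
  have "norm A \<le> (\<Sum>i\<in>(UNIV::'n set). \<Sum>j\<in>(UNIV::'n set). c)"
    using norm_mt_le[of A] assms by (meson order_trans sum_mono)
  thus ?thesis by simp
qed

context envt begin

definition bet :: "nat \<Rightarrow> real" where
  "bet k = real CARD('n) * real CARD('n) * (2 * ((1-e)^k / e / e))"

lemma bet_mono: "k \<le> k' \<Longrightarrow> bet k' \<le> bet k"
  unfolding bet_def using e_pos e_le1
  by (intro mult_left_mono divide_right_mono power_decreasing) auto

lemma bet_small: "0 < r \<Longrightarrow> \<exists>M. bet M < r"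
proof -
  assume r: "0 < r"
  define c where "c = real CARD('n) * real CARD('n) * 2 / e / e"
  have c: "0 < c" unfolding c_def using e_pos by simp
  have "bet k = c * (1-e)^k" for k unfolding bet_def c_def by simp
  moreover obtain M where "(1-e)^M < r / c" using real_arch_pow_inv[of "r/c" "1-e"] r c e_pos by auto
  ultimately have "bet M < r" using c by (simp add: field_simps)
  thus ?thesis by blast
qed

lemma conv:
  "\<exists>L. St L \<and> ((\<lambda>a. itr Pt Qt a (mat 1) (nat (n - a))) \<longlongrightarrow> L) at_bot"
proof -
  define s where "s k = itr Pt Qt (n - 1 - int k) (mat 1) (Suc k)" for k
  have sSt: "St (s k)" for k unfolding s_def using itr_St[OF St_1] by blast
  have c1: "norm (s k' - s k) \<le> bet k" if kk: "k \<le> k'" for k k'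
  proof -
    have eqk: "Suc k' = (k' - k) + Suc k" using kk by simp
    have eqb: "n - 1 - int k' + int (k' - k) = n - 1 - int k" using kk by simp
    have sk': "s k' = itr Pt Qt (n - 1 - int k) (itr Pt Qt (n - 1 - int k') (mat 1) (k' - k)) (Suc k)"
      unfolding s_def eqk itr_comp eqb ..
    have StB: "St (itr Pt Qt (n - 1 - int k') (mat 1) (k' - k))" using itr_St[OF St_1] by blast
    have "\<bar>(s k' - s k) $i$j\<bar> \<le> 2 * ((1-e)^k / e / e)" for i j
      unfolding sk' s_def[of k] vector_minus_component by (rule itr_close[OF StB St_1])
    thus ?thesis unfolding bet_def using norm_mt_bound by (metis mult.assoc)
  qed
  have "Cauchy s"
  proof (rule CauchyI)
    fix r :: real assume "0 < r"
    then obtain M where M: "bet M < r" using bet_small by blast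
    have "norm (s m - s p) < r" if "m \<ge> M" "p \<ge> M" for m p
    proof (cases "m \<le> p")
      case True
      have "norm (s m - s p) = norm (s p - s m)" by (rule norm_minus_commute)
      also have "\<dots> \<le> bet m" using c1 True by blast
      also have "\<dots> \<le> bet M" using bet_mono that by blast
      finally show ?thesis using M by simp
    next
      case False
      have "norm (s m - s p) \<le> bet p" using c1 False by simp
      also have "\<dots> \<le> bet M" using bet_mono that by blast
      finally show ?thesis using M by simp
    qed
    thus "\<exists>M. \<forall>m\<ge>M. \<forall>p\<ge>M. norm (s m - s p) < r" by blast
  qed
  then obtain L where L: "s \<longlonglongrightarrow> L" using Cauchy_convergent_iff convergent_def by blast
  have dL: "norm (s k - L) \<le> bet k" for k
  proof -
    have "(\<lambda>k'. norm (s k' - s k)) \<longlonglongrightarrow> norm (L - s k)" by (intro tendsto_intros L)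
    moreover have "\<forall>k'\<ge>k. norm (s k' - s k) \<le> bet k" using c1 by blast
    ultimately have "norm (L - s k) \<le> bet k" by (intro LIMSEQ_le_const2) auto
    thus ?thesis by (simp add: norm_minus_commute)
  qed
  have StL: "St L"
  proof -
    have comp: "(\<lambda>k. s k $ i $ j) \<longlonglongrightarrow> L $ i $ j" for i j by (intro tendsto_vec_nth L)
    have "0 \<le> L$i$j" for i j
      using comp[of i j] sSt unfolding St_def nonneg_mat_def by (intro LIMSEQ_le_const) auto
    moreover have "rs L i = 1" for i
    proof -
      have "(\<lambda>k. rs (s k) i) \<longlonglongrightarrow> rs L i" unfolding rs_def by (intro tendsto_sum comp)
      moreover have "(\<lambda>k. rs (s k) i) = (\<lambda>k. 1)" using sSt unfolding St_def by auto
      ultimately show ?thesis using LIMSEQ_unique tendsto_const by metis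
    qed
    ultimately show ?thesis unfolding St_def nonneg_mat_def by auto
  qed
  have "((\<lambda>a. itr Pt Qt a (mat 1) (nat (n - a))) \<longlongrightarrow> L) at_bot"
    unfolding tendsto_iff
  proof (intro allI impI)
    fix r :: real assume "0 < r"
    then obtain M where M: "bet M < r" using bet_small by blast
    have "dist (itr Pt Qt a (mat 1) (nat (n - a))) L < r" if a: "a \<le> n - 1 - int M" for a
    proof -
      define k where "k = nat (n - 1 - a)"
      have "itr Pt Qt a (mat 1) (nat (n - a)) = s k"
        unfolding s_def k_def using a by (simp add: Suc_nat_eq_nat_zadd1 algebra_simps)
      moreover have "M \<le> k" unfolding k_def using a by simp
      ultimately show ?thesis using dL[of k] bet_mono[of M k] M by (simp add: dist_norm)
    qed
    thus "\<forall>\<^sub>F a in at_bot. dist (itr Pt Qt a (mat 1) (nat (n - a))) L < r"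
      unfolding eventually_at_bot_linorder by blast
  qed
  thus ?thesis using StL by blast
qed

end



lemma matpow_fix: "(R::('n::finite) mt) *v x = x \<Longrightarrow> mat_pow R k *v x = x"
  by (induct k) (simp_all add: matrix_vector_mul_assoc[symmetric])

lemma opnorm_ge:
  fixes A :: "('n::finite) mt"
  assumes fx: "A *v x = x" and x0: "x \<noteq> 0"
  shows "1 \<le> mat_opnorm A"
proof -
  define y where "y = (1 / infnorm x) *\<^sub>R x"
  have ip: "0 < infnorm x" using x0 infnorm_pos_lt by blast
  have iy: "infnorm y = 1" unfolding y_def infnorm_mul using ip by simp
  have Ay: "A *v y = y" unfolding y_def matrix_vector_mult_scaleR fx ..
  obtain K where K: "K \<ge> 0" "\<forall>z. norm (A *v z) \<le> norm z * K"
    using bounded_linear.nonneg_bounded[OF matrix_vector_mul_bounded_linear[of A]] by blast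
  have bdd: "bdd_above ((\<lambda>z. infnorm (A *v z)) ` {z::real^'n. infnorm z \<le> 1})"
  proof (rule bdd_aboveI2)
    fix z :: "real^'n" assume "z \<in> {z. infnorm z \<le> 1}"
    hence z: "infnorm z \<le> 1" by simp
    have "infnorm (A *v z) \<le> norm (A *v z)" by (rule infnorm_le_norm)
    also have "\<dots> \<le> norm z * K" using K by blast
    also have "\<dots> \<le> (sqrt (real DIM(real^'n)) * infnorm z) * K"
      using norm_le_infnorm[of z] K by (intro mult_right_mono) auto
    also have "\<dots> \<le> sqrt (real DIM(real^'n)) * K"
    proof -
      have "infnorm z * K \<le> 1 * K" using z K by (intro mult_right_mono) auto
      thus ?thesis by (simp add: mult.assoc mult_left_mono)
    qed
    finally show "infnorm (A *v z) \<le> sqrt (real DIM(real^'n)) * K" .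
  qed
  have "infnorm (A *v y) \<le> mat_opnorm A"
    unfolding mat_opnorm_def by (rule cSUP_upper[OF _ bdd]) (simp add: iy)
  thus ?thesis using Ay iy by simp
qed

lemma IR_inv:
  assumes ell: "elliptic P Q R"
  shows "invertible (mat 1 - R n)"
proof -
  obtain eps k0 where eps: "eps > 0" and h: "mat_opnorm (mat_pow (R n) k0) \<le> 1 - eps"
    using ell unfolding elliptic_def by blast
  have "\<forall>x. (mat 1 - R n) *v x = 0 \<longrightarrow> x = 0"
  proof (intro allI impI)
    fix x assume "(mat 1 - R n) *v x = 0"
    hence "R n *v x = x" by (simp add: matrix_vector_mult_diff_rdistrib)
    hence "mat_pow (R n) k0 *v x = x" by (rule matpow_fix)
    thus "x = 0" using opnorm_ge h eps by fastforce
  qed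
  thus ?thesis using matrix_left_invertible_ker invertible_left_inverse by blast
qed

definition Ptil :: "(int \<Rightarrow> ('n::finite) mt) \<Rightarrow> (int \<Rightarrow> 'n mt) \<Rightarrow> int \<Rightarrow> 'n mt" where
  "Ptil P R n = matrix_inv (mat 1 - R n) ** P n"

lemma ell_good:
  assumes env: "environment P Q R" and ell: "elliptic P Q R"
  shows "\<exists>e. \<forall>n. good (Ptil P R n) (Ptil Q R n) e \<and> good (Ptil Q R n) (Ptil P R n) e"
proof -
  obtain eps k0 where eps: "eps > 0" and h: "\<forall>n. (\<forall>i j. (matrix_inv (mat 1 - R n) ** P n)$i$j \<ge> eps) \<and>
             (\<forall>i j. (matrix_inv (mat 1 - R n) ** Q n)$i$j \<ge> eps)"
    using ell unfolding elliptic_def by blast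
  have rs1: "rs (Ptil P R n) i + rs (Ptil Q R n) i = 1" for n i
  proof -
    define Ri where "Ri = matrix_inv (mat 1 - R n)"
    have L: "Ri ** (mat 1 - R n) = mat 1" using inv_left[OF IR_inv[OF ell]] Ri_def by simp
    have "(P n + Q n + R n) *v ones = ones" using env unfolding environment_def by blast
    hence "(P n + Q n) *v ones = (mat 1 - R n) *v ones"
      by (simp add: matrix_vector_mult_add_rdistrib matrix_vector_mult_diff_rdistrib algebra_simps)
    hence "(Ri ** (P n + Q n)) *v ones = ones"
      by (simp add: matrix_vector_mul_assoc[symmetric]) (simp add: matrix_vector_mul_assoc L)
    hence "rs (Ri ** (P n + Q n)) i = 1" using rs_ones by (metis ones_def vec_lambda_beta)
    thus ?thesis unfolding Ptil_def Ri_def[symmetric] matrix_add_ldistrib rs_add .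
  qed
  have "good (Ptil P R n) (Ptil Q R n) eps \<and> good (Ptil Q R n) (Ptil P R n) eps" for n
    unfolding good_def nonneg_mat_def Ptil_def using eps h rs1[of n] unfolding Ptil_def
    by (auto intro: less_imp_le order_trans add.commute) (smt (verit) add.commute)+
  thus ?thesis by blast
qed

lemma step_eq:
  assumes IR: "invertible (mat 1 - R)" and g: "good (matrix_inv (mat 1 - R) ** P) (matrix_inv (mat 1 - R) ** Q) e"
    and D: "Dm A"
  shows "matrix_inv (mat 1 - R - Q ** A) ** P = gmap (matrix_inv (mat 1 - R) ** P) (matrix_inv (mat 1 - R) ** Q) A"
proof -
  define M where "M = mat 1 - R"
  define Ri where "Ri = matrix_inv M"
  define Qt where "Qt = Ri ** Q"
  define B where "B = mat 1 - Qt ** A"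
  define Hb where "Hb = matrix_inv B"
  have MR: "M ** Ri = mat 1" "Ri ** M = mat 1" using inv_left[OF IR] inv_right[OF IR] M_def Ri_def by auto
  have Bi: "invertible B" using H_props(1)[OF g D] B_def Qt_def Ri_def M_def by simp
  have BH: "B ** Hb = mat 1" "Hb ** B = mat 1" using inv_left[OF Bi] inv_right[OF Bi] Hb_def by auto
  have Q: "Q = M ** Qt" unfolding Qt_def by (simp add: matrix_mul_assoc MR)
  have eq: "mat 1 - R - Q ** A = M ** B"
    unfolding B_def mat_diff_ldistrib Q M_def by (simp add: matrix_mul_assoc)
  have "matrix_inv (M ** B) = Hb ** Ri"
  proof (rule inv_unique)
    show "Hb ** Ri ** (M ** B) = mat 1"
      by (metis BH(2) MR(2) matrix_mul_assoc matrix_mul_lid)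
    show "M ** B ** (Hb ** Ri) = mat 1"
      by (metis BH(1) MR(1) matrix_mul_assoc matrix_mul_rid)
  qed
  thus ?thesis unfolding eq gmap_def
    by (simp add: B_def Hb_def Qt_def Ri_def M_def matrix_mul_assoc)
qed



lemma psi_itr:
  assumes ell: "elliptic P Q R" and g: "\<forall>n. good (Ptil P R n) (Ptil Q R n) e"
  shows "psi_fw P Q R a k = itr (Ptil P R) (Ptil Q R) a (mat 1) k"
proof -
  interpret envt "Ptil P R" "Ptil Q R" e using g by unfold_locales blast
  show ?thesis
  proof (induct k)
    case 0 show ?case by simp
  next
    case (Suc k)
    define m where "m = a + int k + 1"
    have D: "Dm (itr (Ptil P R) (Ptil Q R) a (mat 1) k)" using itr_Dm[OF St_Dm[OF St_1]] .
    have "psi_fw P Q R a (Suc k) = matrix_inv (mat 1 - R m - Q m ** itr (Ptil P R) (Ptil Q R) a (mat 1) k) ** P m"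
      using Suc by (simp add: m_def)
    also have "\<dots> = gmap (Ptil P R m) (Ptil Q R m) (itr (Ptil P R) (Ptil Q R) a (mat 1) k)"
      using step_eq[OF IR_inv[OF ell] _ D, of m] g unfolding Ptil_def by blast
    finally show ?case by (simp add: m_def)
  qed
qed

lemma zeta_conv:
  assumes env: "environment P Q R" and ell: "elliptic P Q R"
  shows "\<exists>L. St L \<and> ((\<lambda>a. psi_fw P Q R a (nat (n - a))) \<longlongrightarrow> L) at_bot"
proof -
  obtain e where g: "\<forall>n. good (Ptil P R n) (Ptil Q R n) e" using ell_good[OF env ell] by blast
  interpret envt "Ptil P R" "Ptil Q R" e using g by unfold_locales blast
  show ?thesis using conv[of n] psi_itr[OF ell g] by simp
qed

lemma zeta_St:
  assumes env: "environment P Q R" and ell: "elliptic P Q R"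
  shows "St (zeta P Q R n)"
proof -
  obtain L where L: "St L" "((\<lambda>a. psi_fw P Q R a (nat (n - a))) \<longlongrightarrow> L) at_bot"
    using zeta_conv[OF env ell] by blast
  have "zeta P Q R n = L" unfolding zeta_def by (rule tendsto_Lim[OF trivial_limit_at_bot_linorder L(2)])
  thus ?thesis using L by simp
qed

lemma refl_env: "environment P Q R \<Longrightarrow> environment (\<lambda>n. Q (-n)) (\<lambda>n. P (-n)) (\<lambda>n. R (-n))"
  unfolding environment_def by (simp add: add.commute add.left_commute)

lemma refl_ell: "elliptic P Q R \<Longrightarrow> elliptic (\<lambda>n. Q (-n)) (\<lambda>n. P (-n)) (\<lambda>n. R (-n))"
proof -
  assume "elliptic P Q R"
  then obtain eps k0 where h: "eps > 0" "\<forall>n. mat_opnorm (mat_pow (R n) k0) \<le> 1 - eps \<and>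
             (\<forall>i j. (matrix_inv (mat 1 - R n) ** P n)$i$j \<ge> eps) \<and>
             (\<forall>i j. (matrix_inv (mat 1 - R n) ** Q n)$i$j \<ge> eps)" unfolding elliptic_def by blast
  show ?thesis unfolding elliptic_def
    by (rule exI[of _ eps], rule exI[of _ k0]) (use h in auto)
qed

lemma uminus_int: "filterlim (\<lambda>x::int. - x) at_bot at_top"
  unfolding filterlim_at_bot eventually_at_top_linorder
proof
  fix Z :: int show "\<exists>N. \<forall>n\<ge>N. - n \<le> Z" by (rule exI[of _ "-Z"]) auto
qed

lemma psi_bw_refl: "psi_bw P Q R b k = psi_fw (\<lambda>n. Q (-n)) (\<lambda>n. P (-n)) (\<lambda>n. R (-n)) (-b) k"
  by (induct k) (simp_all add: algebra_simps)

lemma zeta_minus_St: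
  assumes env: "environment P Q R" and ell: "elliptic P Q R"
  shows "St (zeta_minus P Q R n)"
proof -
  obtain L where L: "St L" "((\<lambda>a. psi_fw (\<lambda>n. Q (-n)) (\<lambda>n. P (-n)) (\<lambda>n. R (-n)) a (nat (-n - a))) \<longlongrightarrow> L) at_bot"
    using zeta_conv[OF refl_env[OF env] refl_ell[OF ell], of "-n"] by blast
  have "((\<lambda>b. psi_fw (\<lambda>n. Q (-n)) (\<lambda>n. P (-n)) (\<lambda>n. R (-n)) (-b) (nat (-n - (-b)))) \<longlongrightarrow> L) at_top"
    using filterlim_compose[OF L(2) uminus_int] by (simp add: o_def)
  hence "((\<lambda>b. psi_bw P Q R b (nat (b - n))) \<longlongrightarrow> L) at_top" unfolding psi_bw_refl by simp
  hence "zeta_minus P Q R n = L" unfolding zeta_minus_def by (rule tendsto_Lim[OF trivial_limit_at_top_linorder])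
  thus ?thesis using L by simp
qed

lemma inv_AB:
  assumes IR: "invertible (mat 1 - R)" and g: "good (matrix_inv (mat 1 - R) ** P) (matrix_inv (mat 1 - R) ** Q) e"
    and D: "Dm A"
  shows "invertible (mat 1 - R - Q ** A)"
proof -
  define M where "M = mat 1 - R"
  define Ri where "Ri = matrix_inv M"
  define Qt where "Qt = Ri ** Q"
  define B where "B = mat 1 - Qt ** A"
  have MR: "M ** Ri = mat 1" using inv_right[OF IR] M_def Ri_def by auto
  have Bi: "invertible B" using H_props(1)[OF g D] B_def Qt_def Ri_def M_def by simp
  have Q: "Q = M ** Qt" unfolding Qt_def by (simp add: matrix_mul_assoc MR)
  have eq: "mat 1 - R - Q ** A = M ** B"
    unfolding B_def mat_diff_ldistrib Q M_def by (simp add: matrix_mul_assoc)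
  show ?thesis unfolding eq using invertible_mult[OF IR[folded M_def] Bi] .
qed

lemma grp1: "(u::'a::ab_group_add) - X - Y = W \<Longrightarrow> u = V + X + W \<Longrightarrow> Y = V"
proof -
  assume a: "u - X - Y = W" and b: "u = V + X + W"
  have "Y = u - X - W" using a by (simp add: algebra_simps)
  thus ?thesis using b by simp
qed

lemma grp2: "(u::'a::ab_group_add) - X - Y = W \<Longrightarrow> u = W + X + V \<Longrightarrow> Y = V"
  using grp1[of u X Y W V] by (simp add: add.commute)

lemma dot_vm: "(x v* (M::('n::finite) mt)) \<bullet> y = x \<bullet> (M *v y)"
  unfolding inner_vec_def vm_entry mv_entry
  by (simp add: sum_distrib_left sum_distrib_right mult.assoc) (rule sum.swap)

theorem lemma4p1:
  fixes P Q R :: "int \<Rightarrow> real^'m^'m"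
    and mm rho :: "int \<Rightarrow> real^'m"
  assumes env: "environment P Q R"
    and ell: "elliptic P Q R"
    and hm: "\<forall>n. mm n = P n *v mm (n + 1) + R n *v mm n + Q n *v mm (n - 1)"
    and hrho: "\<forall>n. rho n = rho (n - 1) v* P (n - 1) + rho n v* R n + rho (n + 1) v* Q (n + 1)"
    and halpha: "\<forall>n. rho n = rho (n + 1) v* alpha P Q R n"
    and halpham: "\<forall>n. rho (n + 1) = rho n v* alpha_minus P Q R (n + 1)"
  shows "\<exists>c::real. \<forall>n.
           (rho (n + 1) v* Q (n + 1)) \<bullet> (mm n - zeta P Q R n *v mm (n + 1)) = c \<and>
           (rho n v* P n) \<bullet> (mm (n + 1) - zeta_minus P Q R (n + 1) *v mm n) = - c"
proof -
  obtain e where g: "\<forall>n. good (Ptil P R n) (Ptil Q R n) e \<and> good (Ptil Q R n) (Ptil P R n) e"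
    using ell_good[OF env ell] by blast
  define Z where "Z = zeta P Q R"
  define Zm where "Zm = zeta_minus P Q R"
  have AI: "invertible (mat 1 - R n - Q n ** Z k)" for n k
  proof (rule inv_AB[where e=e, OF IR_inv[OF ell]])
    show "good (matrix_inv (mat 1 - R n) ** P n) (matrix_inv (mat 1 - R n) ** Q n) e"
      using g unfolding Ptil_def by blast
    show "Dm (Z k)" using St_Dm[OF zeta_St[OF env ell]] unfolding Z_def .
  qed
  have BI: "invertible (mat 1 - R n - P n ** Zm k)" for n k
  proof (rule inv_AB[where e=e, OF IR_inv[OF ell]])
    show "good (matrix_inv (mat 1 - R n) ** Q n) (matrix_inv (mat 1 - R n) ** P n) e"
      using g unfolding Ptil_def by blast
    show "Dm (Zm k)" using St_Dm[OF zeta_minus_St[OF env ell]] unfolding Zm_def .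
  qed
  have expand: "x v* (mat 1 - R n - M ** Y) = x - x v* R n - (x v* M) v* Y" for x M Y n
    by (simp add: vector_matrix_mult_diff_rdistrib vector_matrix_mul_assoc)
  have E1: "rho n v* (mat 1 - R n - Q n ** Z (n - 1)) = rho (n + 1) v* Q (n + 1)" for n
  proof -
    have "rho n v* (mat 1 - R n - Q n ** Z (n - 1))
        = rho (n + 1) v* (Q (n + 1) ** (matrix_inv (mat 1 - R n - Q n ** Z (n - 1)) ** (mat 1 - R n - Q n ** Z (n - 1))))"
      using halpha[rule_format, of n] unfolding alpha_def Z_def
      by (metis vector_matrix_mul_assoc matrix_mul_assoc)
    thus ?thesis using inv_left[OF AI] by simp
  qed
  have E2: "rho (n + 1) v* (mat 1 - R (n + 1) - P (n + 1) ** Zm (n + 2)) = rho n v* P n" for n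
  proof -
    have "rho (n + 1) v* (mat 1 - R (n + 1) - P (n + 1) ** Zm (n + 2))
        = rho n v* (P n ** (matrix_inv (mat 1 - R (n + 1) - P (n + 1) ** Zm (n + 2)) ** (mat 1 - R (n + 1) - P (n + 1) ** Zm (n + 2))))"
      using halpham[rule_format, of n] unfolding alpha_minus_def Zm_def
      by (simp add: vector_matrix_mul_assoc matrix_mul_assoc add.assoc)
    thus ?thesis using inv_left[OF BI] by simp
  qed
  have F1: "(rho (n + 1) v* Q (n + 1)) v* Z n = rho n v* P n" for n
  proof -
    have e: "n + 1 - 1 = n" "n + 1 + 1 = n + 2" by simp_all
    have a: "rho (n + 1) - rho (n + 1) v* R (n + 1) - (rho (n + 1) v* Q (n + 1)) v* Z n = rho (n + 2) v* Q (n + 2)"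
      using E1[of "n + 1"] unfolding e expand .
    have b: "rho (n + 1) = rho n v* P n + rho (n + 1) v* R (n + 1) + rho (n + 2) v* Q (n + 2)"
      using hrho[rule_format, of "n + 1"] unfolding e .
    show ?thesis by (rule grp1[OF a b])
  qed
  have F2: "(rho n v* P n) v* Zm (n + 1) = rho (n + 1) v* Q (n + 1)" for n
  proof -
    have e: "n - 1 + 1 = n" "n - 1 + 2 = n + 1" by simp_all
    have a: "rho n - rho n v* R n - (rho n v* P n) v* Zm (n + 1) = rho (n - 1) v* P (n - 1)"
      using E2[of "n - 1"] unfolding e expand .
    have b: "rho n = rho (n - 1) v* P (n - 1) + rho n v* R n + rho (n + 1) v* Q (n + 1)"
      using hrho by blast
    show ?thesis by (rule grp2[OF a b])
  qed
  define c where "c n = (rho (n + 1) v* Q (n + 1)) \<bullet> mm n - (rho n v* P n) \<bullet> mm (n + 1)" for n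
  have G1: "(rho (n + 1) v* Q (n + 1)) \<bullet> (mm n - Z n *v mm (n + 1)) = c n" for n
    unfolding c_def inner_diff_right dot_vm[symmetric] F1 ..
  have G2: "(rho n v* P n) \<bullet> (mm (n + 1) - Zm (n + 1) *v mm n) = - c n" for n
    unfolding c_def inner_diff_right dot_vm[symmetric] F2 by simp
  have step: "c n = c (n - 1)" for n
  proof -
    have hr: "rho (n + 1) v* Q (n + 1) = rho n - rho (n - 1) v* P (n - 1) - rho n v* R n"
      using hrho[rule_format, of n] by (simp add: algebra_simps)
    have hmn: "rho n \<bullet> mm n = rho n \<bullet> (P n *v mm (n + 1)) + rho n \<bullet> (R n *v mm n) + rho n \<bullet> (Q n *v mm (n - 1))"
      using hm[rule_format, of n] by (metis inner_add_right)
    have "c n = rho n \<bullet> mm n - (rho (n - 1) v* P (n - 1)) \<bullet> mm n - rho n \<bullet> (R n *v mm n) - rho n \<bullet> (P n *v mm (n + 1))"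
      unfolding c_def hr by (simp add: inner_diff_left dot_vm)
    moreover have "c (n - 1) = rho n \<bullet> (Q n *v mm (n - 1)) - (rho (n - 1) v* P (n - 1)) \<bullet> mm n"
      unfolding c_def by (simp add: dot_vm)
    ultimately show ?thesis using hmn by simp
  qed
  have const: "c n = c 0" for n
  proof (induct n rule: int_induct[where k = 0])
    case base show ?case ..
  next
    case (step1 i) thus ?case using step[of "i + 1"] by simp
  next
    case (step2 i) thus ?case using step[of i] by simp
  qed
  show ?thesis using G1 G2 const unfolding Z_def Zm_def by (intro exI[of _ "c 0"]) simp
qed


end
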